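(* Let $\hat y_1,\dots,\hat y_n\in\mathbb R$ be predictions, let $y_1,\dots,y_n\in\{-1,1\}$ be labels, let $\mathcal I^+=\{i: y_i=1\}$ and $\mathcal I^-=\{i:y_i=-1\}$, and let $m\ge 0$. Let $\ell(z)=(m-z)_+^2$ be the squared hinge loss, where $(z)_+=\max(z,0)$. Define $v_i=\hat y_i+m\,I[y_i=-1]$ for $i=1,\dots,n$ (where $I[\cdot]$ is $1$ if the condition holds and $0$ otherwise), and let $s_1,\dots,s_n$ be a permutation of $\{1,\dots,n\}$ with $v_{s_1}\le\cdots\le v_{s_n}$. Set $a_0=b_0=c_0=L_0=0$ and for $i=1,\dots,n$ define recursively $$a_i=a_{i-1}+I[y_{s_i}=1],\quad b_i=b_{i-1}+I[y_{s_i}=1]\,2(m-\hat y_{s_i}),\quad c_i=c_{i-1}+I[y_{s_i}=1]\,(m-\hat y_{s_i})^2,$$ $$L_i=L_{i-1}+I[y_{s_i}=-1]\left(a_i\hat y_{s_i}^2+b_i\hat y_{s_i}+c_i\right).$$ Then $$\sum_{k\in\mathcal I^-}\sum_{j\in\mathcal I^+}\ell(\hat y_j-\hat y_k)=L_n.$$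
   Context: $m$ is a margin hyper-parameter; the left-hand side is the all-pairs squared hinge loss summed over all pairs of a positively labeled and a negatively labeled example. *)

theory Defs
  imports Complex_Main
begin

definition pos_part :: "real \<Rightarrow> real" where
  "pos_part z = max z 0"

definition sq_hinge :: "real \<Rightarrow> real \<Rightarrow> real" where
  "sq_hinge m z = (pos_part (m - z))^2"

definition ind :: "bool \<Rightarrow> real" where
  "ind P = (if P then 1 else 0)"

fun rec_a :: "(nat \<Rightarrow> real) \<Rightarrow> (nat \<Rightarrow> nat) \<Rightarrow> nat \<Rightarrow> real" where
  "rec_a y s 0 = 0"
| "rec_a y s (Suc i) = rec_a y s i + ind (y (s (Suc i)) = 1)"

fun rec_b :: "real \<Rightarrow> (nat \<Rightarrow> real) \<Rightarrow> (nat \<Rightarrow> real) \<Rightarrow> (nat \<Rightarrow> nat) \<Rightarrow> nat \<Rightarrow> real" where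
  "rec_b m yh y s 0 = 0"
| "rec_b m yh y s (Suc i) = rec_b m yh y s i
      + ind (y (s (Suc i)) = 1) * (2 * (m - yh (s (Suc i))))"

fun rec_c :: "real \<Rightarrow> (nat \<Rightarrow> real) \<Rightarrow> (nat \<Rightarrow> real) \<Rightarrow> (nat \<Rightarrow> nat) \<Rightarrow> nat \<Rightarrow> real" where
  "rec_c m yh y s 0 = 0"
| "rec_c m yh y s (Suc i) = rec_c m yh y s i
      + ind (y (s (Suc i)) = 1) * (m - yh (s (Suc i)))^2"

fun rec_L :: "real \<Rightarrow> (nat \<Rightarrow> real) \<Rightarrow> (nat \<Rightarrow> real) \<Rightarrow> (nat \<Rightarrow> nat) \<Rightarrow> nat \<Rightarrow> real" where
  "rec_L m yh y s 0 = 0"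
| "rec_L m yh y s (Suc i) = rec_L m yh y s i
      + ind (y (s (Suc i)) = -1) *
        (rec_a y s (Suc i) * (yh (s (Suc i)))^2
         + rec_b m yh y s (Suc i) * yh (s (Suc i))
         + rec_c m yh y s (Suc i))"

end

theory Submission
  imports Defs
begin

lemma abc_sum:
  "rec_a y s p * x^2 + rec_b m yh y s p * x + rec_c m yh y s p
   = (\<Sum>q\<in>{1..p}. ind (y (s q) = 1) * (m - yh (s q) + x)^2)"
  by (induction p) (auto simp: sum.cl_ivl_Suc algebra_simps power2_eq_square ind_def)

lemma L_sum:
  "rec_L m yh y s t = (\<Sum>p\<in>{1..t}. ind (y (s p) = -1) *
      (\<Sum>q\<in>{1..p}. ind (y (s q) = 1) * (m - yh (s q) + yh (s p))^2))"
proof (induction t)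
  case 0 then show ?case by simp
next
  case (Suc t)
  show ?case
    using abc_sum[of y s "Suc t" "yh (s (Suc t))" m yh, symmetric]
    by (simp only: rec_L.simps Suc sum.cl_ivl_Suc) simp
qed

theorem theorem2:
  fixes n :: nat and yh y :: "nat \<Rightarrow> real" and m :: real and s :: "nat \<Rightarrow> nat"
  assumes labels: "\<forall>i\<in>{1..n}. y i = 1 \<or> y i = -1"
    and m_nonneg: "m \<ge> 0"
    and perm: "bij_betw s {1..n} {1..n}"
    and sorted: "\<forall>i\<in>{1..n}. \<forall>j\<in>{1..n}. i \<le> j \<longrightarrow>
        yh (s i) + m * ind (y (s i) = -1) \<le> yh (s j) + m * ind (y (s j) = -1)"
  shows "(\<Sum>k\<in>{i\<in>{1..n}. y i = -1}. \<Sum>j\<in>{i\<in>{1..n}. y i = 1}. sq_hinge m (yh j - yh k))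
         = rec_L m yh y s n"
proof -
  define F where "F k j = sq_hinge m (yh j - yh k)" for k j
  have inner: "(\<Sum>q\<in>{1..p}. ind (y (s q) = 1) * (m - yh (s q) + yh (s p))^2)
      = (\<Sum>q\<in>{1..n}. ind (y (s q) = 1) * F (s p) (s q))"
    if p: "p \<in> {1..n}" "y (s p) = -1" for p
  proof -
    have split: "{1..n} = {1..p} \<union> {p<..n}" using p by auto
    have A: "(\<Sum>q\<in>{1..p}. ind (y (s q) = 1) * (m - yh (s q) + yh (s p))^2)
        = (\<Sum>q\<in>{1..p}. ind (y (s q) = 1) * F (s p) (s q))"
    proof (rule sum.cong)
      fix q assume q: "q \<in> {1..p}"
      show "ind (y (s q) = 1) * (m - yh (s q) + yh (s p))^2 = ind (y (s q) = 1) * F (s p) (s q)"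
      proof (cases "y (s q) = 1")
        case True
        have "yh (s q) + m * ind (y (s q) = -1) \<le> yh (s p) + m * ind (y (s p) = -1)"
          using sorted[rule_format, of q p] sorted[rule_format, of p q] q p by auto
        then have "yh (s q) \<le> yh (s p) + m" using True p by (simp add: ind_def)
        then show ?thesis by (simp add: F_def sq_hinge_def pos_part_def True)
      qed (simp add: ind_def)
    qed simp
    have B: "(\<Sum>q\<in>{p<..n}. ind (y (s q) = 1) * F (s p) (s q)) = 0"
    proof (rule sum.neutral, rule ballI)
      fix q assume q: "q \<in> {p<..n}"
      show "ind (y (s q) = 1) * F (s p) (s q) = 0"
      proof (cases "y (s q) = 1")
        case True
        have "yh (s p) + m * ind (y (s p) = -1) \<le> yh (s q) + m * ind (y (s q) = -1)"
          using sorted[rule_format, of q p] sorted[rule_format, of p q] q p by auto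
        then have "yh (s p) + m \<le> yh (s q)" using True p by (simp add: ind_def)
        then show ?thesis by (simp add: F_def sq_hinge_def pos_part_def True)
      qed (simp add: ind_def)
    qed
    have "(\<Sum>q\<in>{1..n}. ind (y (s q) = 1) * F (s p) (s q))
        = (\<Sum>q\<in>{1..p}. ind (y (s q) = 1) * F (s p) (s q))
          + (\<Sum>q\<in>{p<..n}. ind (y (s q) = 1) * F (s p) (s q))"
      unfolding split by (rule sum.union_disjoint) auto
    then show ?thesis using A B by simp
  qed
  have "rec_L m yh y s n = (\<Sum>p\<in>{1..n}. ind (y (s p) = -1) *
      (\<Sum>q\<in>{1..n}. ind (y (s q) = 1) * F (s p) (s q)))"
    unfolding L_sum
  proof (rule sum.cong)
    fix p assume p: "p \<in> {1..n}"
    show "ind (y (s p) = -1) * (\<Sum>q\<in>{1..p}. ind (y (s q) = 1) * (m - yh (s q) + yh (s p))^2)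
      = ind (y (s p) = -1) * (\<Sum>q\<in>{1..n}. ind (y (s q) = 1) * F (s p) (s q))"
      using inner[OF p] by (cases "y (s p) = -1") (auto simp: ind_def)
  qed simp
  also have "\<dots> = (\<Sum>k\<in>{1..n}. ind (y k = -1) *
      (\<Sum>j\<in>{1..n}. ind (y j = 1) * F k j))"
  proof -
    have r: "(\<Sum>q\<in>{1..n}. g (s q)) = (\<Sum>j\<in>{1..n}. g j)" for g :: "nat \<Rightarrow> real"
      using sum.reindex_bij_betw[OF perm, of g] .
    show ?thesis
      using r[of "\<lambda>k. ind (y k = -1) * (\<Sum>j\<in>{1..n}. ind (y j = 1) * F k j)"]
            r[of "\<lambda>j. ind (y j = 1) * F _ j"]
      by simp
  qed
  also have "\<dots> = (\<Sum>k\<in>{i\<in>{1..n}. y i = -1}. \<Sum>j\<in>{i\<in>{1..n}. y i = 1}. F k j)"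
    unfolding sum.inter_filter[OF finite_atLeastAtMost]
    by (rule sum.cong) (auto simp: ind_def intro!: sum.cong)
  finally show ?thesis by (simp add: F_def)
qed

end
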